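(* Let $G=G_{\mathbf E}$ be a multi-GGS group which is not the constant GGS group. Then $$N_{\mathrm{lab}(\Sigma)}(A)\le C(A)\qquad\text{and}\qquad N_{\mathrm{lab}(\Sigma)}(B)\le C(B),$$ where $C(\cdot)$ denotes the centraliser in $\mathrm{Aut}(X^* )$.
   Context: Let $p$ be an odd prime and $X=\{0,1,\dots,p-1\}$, identified with $\mathbb F_p$. $X^*$ is the $p$-regular rooted tree of finite words over $X$; $\mathrm{Aut}(X^* )$ acts on the right. Sections $g|_v$ are defined by $(vw)^g=v^g\,w^{g|_v}$, and the label $g|^v\in\mathrm{Sym}(X)$ is the permutation by which $g|_v$ acts on one-letter words. $\mathrm{Stab}(1)$ is the stabiliser of all one-letter words and $\psi_1\colon\mathrm{Stab}(1)\to\mathrm{Aut}(X^* )^p$, $g\mapsto(g|_0,\dots,g|_{p-1})$, is an isomorphism. $\sigma=(0\,1\,\cdots\,p-1)$, $\Sigma=\langle\sigma\rangle$; $a$ is the rooted automorphism acting as $\sigma$ on the first letter and trivially on the rest, $A=\langle a\rangle$. $\mathrm{lab}(\Sigma)=\{g\in\mathrm{Aut}(X^* )\mid g|^v\in\Sigma\text{ for all } v\in X^*\}$. Let $\mathbf E\le\mathbb F_p^{p-1}$ be a subspace of dimension $r\ge1$; $E$ is the $r\times(p-1)$ matrix whose rows form a fixed basis of $\mathbf E$, with columns $\mathbf e_1,\dots,\mathbf e_{p-1}$. For $\mathbf n\in\mathbb F_p^r$, $b^{\mathbf n}\in\mathrm{Stab}(1)$ is the unique automorphism with $\psi_1(b^{\mathbf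 n})=(b^{\mathbf n},a^{\mathbf n\cdot\mathbf e_1},\dots,a^{\mathbf n\cdot\mathbf e_{p-1}})$; $B=\{b^{\mathbf n}\}$. $G_{\mathbf E}$ is generated by $a$ and $B$; it is the constant GGS group if $\mathbf E=\{(\lambda,\dots,\lambda)\mid\lambda\in\mathbb F_p\}$. *)

theory Defs
  imports "HOL-Computational_Algebra.Primes"
begin

text \<open>Letters are 0..p-1 (identified with F_p); words are lists of letters.
 Automorphisms of the tree X^* act on the right; we represent g by the function
 w \<mapsto> w^g on words (extended by the identity outside words). Thus the product
 g h (first g, then h) is the function composition h \<circ> g.\<close>

definition words :: "nat \<Rightarrow> nat list set" where
  "words p = {w. set w \<subseteq> {..<p}}"

definition is_aut :: "nat \<Rightarrow> (nat list \<Rightarrow> nat list) \<Rightarrow> bool" where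
  "is_aut p g \<longleftrightarrow> bij_betw g (words p) (words p)
     \<and> (\<forall>w. w \<notin> words p \<longrightarrow> g w = w)
     \<and> (\<forall>v w. v @ w \<in> words p \<longrightarrow>
          length (g (v @ w)) = length (v @ w) \<and> take (length v) (g (v @ w)) = g v)"

definition Aut :: "nat \<Rightarrow> (nat list \<Rightarrow> nat list) set" where
  "Aut p = {g. is_aut p g}"

text \<open>lab(Sigma): every label g|^v (the permutation x \<mapsto> last letter of (v x)^g)
 is a power of sigma = (0 1 ... p-1).\<close>
definition labSigma :: "nat \<Rightarrow> (nat list \<Rightarrow> nat list) set" where
  "labSigma p = {g \<in> Aut p. \<forall>v \<in> words p. \<exists>k. \<forall>x<p. g (v @ [x]) ! length v = (x + k) mod p}"

fun rot :: "nat \<Rightarrow> nat \<Rightarrow> nat list \<Rightarrow> nat list" where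
  "rot p k [] = []"
| "rot p k (x # w) = ((x + k) mod p) # w"

definition aaut :: "nat \<Rightarrow> nat list \<Rightarrow> nat list" where
  "aaut p = (\<lambda>w. if w \<in> words p then rot p 1 w else w)"

definition Agrp :: "nat \<Rightarrow> (nat list \<Rightarrow> nat list) set" where
  "Agrp p = {aaut p ^^ k | k. True}"

definition vecs :: "nat \<Rightarrow> (nat \<Rightarrow> nat) set" where
  "vecs p = {u. \<forall>i. (i \<in> {1..<p} \<longrightarrow> u i < p) \<and> (i \<notin> {1..<p} \<longrightarrow> u i = 0)}"

definition subspace_Fp :: "nat \<Rightarrow> (nat \<Rightarrow> nat) set \<Rightarrow> bool" where
  "subspace_Fp p E \<longleftrightarrow> E \<subseteq> vecs p \<and> (\<lambda>_. 0) \<in> E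
     \<and> (\<forall>u\<in>E. \<forall>v\<in>E. (\<lambda>i. (u i + v i) mod p) \<in> E)
     \<and> (\<forall>c<p. \<forall>u\<in>E. (\<lambda>i. (c * u i) mod p) \<in> E)"

text \<open>The subspace giving the constant GGS group.\<close>
definition constE :: "nat \<Rightarrow> (nat \<Rightarrow> nat) set" where
  "constE p = {u \<in> vecs p. \<exists>c<p. \<forall>i\<in>{1..<p}. u i = c}"

text \<open>b_u with psi_1(b_u) = (b_u, a^{u_1}, ..., a^{u_{p-1}}). For a basis matrix E,
 b^n = b_u with u = n E (so u_i = n . e_i), and B = {b_u | u \<in> E}.\<close>
fun bfun :: "nat \<Rightarrow> (nat \<Rightarrow> nat) \<Rightarrow> nat list \<Rightarrow> nat list" where
  "bfun p u [] = []"
| "bfun p u (x # w) = (if x = 0 then 0 # bfun p u w else x # rot p (u x) w)"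

definition baut :: "nat \<Rightarrow> (nat \<Rightarrow> nat) \<Rightarrow> nat list \<Rightarrow> nat list" where
  "baut p u = (\<lambda>w. if w \<in> words p then bfun p u w else w)"

definition Bgrp :: "nat \<Rightarrow> (nat \<Rightarrow> nat) set \<Rightarrow> (nat list \<Rightarrow> nat list) set" where
  "Bgrp p E = baut p ` E"

definition centr :: "nat \<Rightarrow> (nat list \<Rightarrow> nat list) set \<Rightarrow> (nat list \<Rightarrow> nat list) set" where
  "centr p S = {g \<in> Aut p. \<forall>h\<in>S. g \<circ> h = h \<circ> g}"

definition normlab :: "nat \<Rightarrow> (nat list \<Rightarrow> nat list) set \<Rightarrow> (nat list \<Rightarrow> nat list) set" where
  "normlab p S = {g \<in> labSigma p. (\<lambda>h. g \<circ> h) ` S = (\<lambda>h. h \<circ> g) ` S}"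

end

theory Submission
  imports Defs "HOL-Number_Theory.Cong"
begin

lemma words_simps: "xs \<in> words p \<longleftrightarrow> (\<forall>x\<in>set xs. x < p)"
  unfolding words_def by auto

lemma lab_facts:
  assumes g: "g \<in> labSigma p" and p: "p > 0"
  obtains K where "\<forall>x<p. g [x] = [(x + K []) mod p]"
    "\<forall>x<p. \<forall>y<p. g [x,y] = [(x + K []) mod p, (y + K [x]) mod p]"
proof -
  have ag: "is_aut p g" and L: "\<forall>v\<in>words p. \<exists>k. \<forall>x<p. g (v @ [x]) ! length v = (x + k) mod p"
    using g unfolding labSigma_def Aut_def by auto
  from bchoice[OF L] obtain K where K: "\<forall>v\<in>words p. \<forall>x<p. g (v @ [x]) ! length v = (x + K v) mod p"
    by blast
  have l1: "\<forall>x<p. g [x] = [(x + K []) mod p]"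
  proof (intro allI impI)
    fix x assume x: "x < p"
    have w1: "[] @ [x] \<in> words p" using x by (simp add: words_simps)
    have "length (g ([] @ [x])) = 1" using ag w1 unfolding is_aut_def by fastforce
    moreover have "g ([] @ [x]) ! length ([]::nat list) = (x + K []) mod p" using K[rule_format, of "[]" x] x by (simp add: words_simps)
    ultimately show "g [x] = [(x + K []) mod p]"
      by (cases "g [x]") auto
  qed
  have "\<forall>x<p. \<forall>y<p. g [x,y] = [(x + K []) mod p, (y + K [x]) mod p]"
  proof (intro allI impI)
    fix x y assume x: "x < p" and y: "y < p"
    have w: "[x] @ [y] \<in> words p" using x y by (auto simp: words_simps)
    have len: "length (g ([x] @ [y])) = 2" and tk: "take 1 (g ([x] @ [y])) = g [x]"
      using ag w unfolding is_aut_def by fastforce+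
    have n1: "g ([x] @ [y]) ! 1 = (y + K [x]) mod p" using K[rule_format, of "[x]" y] x y by (simp add: words_simps)
    have n0: "g ([x] @ [y]) ! 0 = (x + K []) mod p"
      using tk l1 x by (metis nth_take zero_less_one nth_Cons_0)
    obtain a b where "g ([x] @ [y]) = [a, b]" using len
      by (cases "g ([x] @ [y])"; cases "tl (g ([x] @ [y]))") auto
    then show "g [x,y] = [(x + K []) mod p, (y + K [x]) mod p]" using n0 n1 by simp
  qed
  with l1 that show ?thesis by blast
qed

lemma vec_lt: "u \<in> vecs p \<Longrightarrow> p > 0 \<Longrightarrow> u x < p"
  unfolding vecs_def by (cases "x \<in> {1..<p}") auto

lemma vec0: "u \<in> vecs p \<Longrightarrow> u 0 = 0"
  unfolding vecs_def by auto

lemma key: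
  assumes p: "p > 0"
    and K2: "\<forall>x<p. \<forall>y<p. g [x,y] = [(x + K []) mod p, (y + K [x]) mod p]"
    and u: "u \<in> vecs p" and w: "w \<in> vecs p"
    and eq: "g \<circ> baut p u = baut p w \<circ> g"
  shows "\<forall>x<p. u x = w ((x + K []) mod p)"
  proof (intro allI impI)
    fix x assume x: "x < p"
    have ux: "u x < p" using vec_lt[OF u p] .
    have "baut p u [x, 0] = [x, u x]"
      using x p ux vec0[OF u] by (auto simp: baut_def words_simps)
    hence lhs: "(g \<circ> baut p u) [x,0] = [(x + K []) mod p, (u x + K [x]) mod p]"
      using K2 x ux by simp
    define c where "c = (x + K []) mod p"
    define d where "d = (0 + K [x]) mod p"
    have cp: "c < p" "d < p" using p by (auto simp: c_def d_def)
    have wc: "w c < p" using vec_lt[OF w p] .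
    have "baut p w [c, d] = [c, (d + w c) mod p]"
      using cp p vec0[OF w] by (auto simp: baut_def words_simps)
    hence rhs: "(baut p w \<circ> g) [x,0] = [c, (d + w c) mod p]"
      using K2 x p by (simp add: c_def d_def)
    from lhs rhs eq have "(u x + K [x]) mod p = (d + w c) mod p" by simp
    hence "(u x + K [x]) mod p = (w c + K [x]) mod p" by (simp add: d_def mod_add_right_eq add.commute)
    hence "[u x = w c] (mod p)" by (simp add: cong_def cong_add_rcancel_nat[unfolded cong_def])
    thus "u x = w ((x + K []) mod p)" using ux wc by (simp add: cong_def c_def)
  qed

lemma contra:
  assumes pr: "prime p" and Ev: "E \<subseteq> vecs p" and r: "0 < r" "r < p"
    and sh: "\<forall>u\<in>E. \<exists>w\<in>E. \<forall>y<p. w y = u ((y + p - r) mod p)"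
    and u0: "u0 \<in> E" "u0 \<noteq> (\<lambda>_. 0)"
  shows False
proof -
  have p: "p > 0" using r by simp
  have H: "\<forall>u\<in>E. u ((k * (p - r)) mod p) = 0" for k
  proof (induction k)
    case 0
    then show ?case using Ev vec0 by auto
  next
    case (Suc k)
    show ?case
    proof
      fix u assume u: "u \<in> E"
      obtain w where w: "w \<in> E" "\<forall>y<p. w y = u ((y + p - r) mod p)" using sh u by blast
      define y where "y = (k * (p - r)) mod p"
      have yp: "y < p" using p by (simp add: y_def)
      have "w y = 0" using Suc w(1) by (simp add: y_def)
      moreover have "(y + p - r) mod p = (Suc k * (p - r)) mod p"
      proof -
        have "y + p - r = y + (p - r)" using r by simp
        hence "(y + p - r) mod p = (k * (p - r) + (p - r)) mod p"
          by (simp add: y_def mod_add_left_eq)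
        thus ?thesis by (simp add: add.commute)
      qed
      ultimately show "u ((Suc k * (p - r)) mod p) = 0" using w(2) yp by simp
    qed
  qed
  have "\<not> p dvd (p - r)" using r by (simp add: nat_dvd_not_less)
  hence "coprime p (p - r)" using prime_imp_coprime[OF pr] by blast
  hence "coprime (p - r) p" by (simp add: coprime_commute)
  then obtain x where x: "[(p - r) * x = Suc 0] (mod p)" using cong_solve_coprime_nat by blast
  have "u0 i = 0" for i
  proof (cases "i < p")
    case True
    have "[(p - r) * x * i = Suc 0 * i] (mod p)" using x cong_mult cong_refl by blast
    hence "((x * i) * (p - r)) mod p = i" using True by (simp add: cong_def mult.commute mult.left_commute)
    thus ?thesis using H[of "x * i"] u0(1) by metis
  next
    case False
    thus ?thesis using u0(1) Ev unfolding vecs_def by auto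
  qed
  thus False using u0(2) by auto
qed

lemma apow: "p > 0 \<Longrightarrow> w \<in> words p \<Longrightarrow> (aaut p ^^ k) w = rot p k w \<and> rot p k w \<in> words p"
proof (induction k)
  case 0
  then show ?case by (cases w) (auto simp: words_simps)
next
  case (Suc k)
  then have ih: "(aaut p ^^ k) w = rot p k w" "rot p k w \<in> words p" by auto
  have "rot p 1 (rot p k w) = rot p (Suc k) w"
    by (cases w) (auto simp: mod_Suc_eq)
  moreover have "rot p (Suc k) w \<in> words p" using Suc.prems by (cases w) (auto simp: words_simps)
  ultimately show ?case using ih by (simp add: aaut_def)
qed

lemma apow_out: "w \<notin> words p \<Longrightarrow> (aaut p ^^ k) w = w"
  by (induction k) (auto simp: aaut_def)

lemma comm_pow: "g \<circ> f = f \<circ> g \<Longrightarrow> g \<circ> (f ^^ n) = (f ^^ n) \<circ> g"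
proof (induction n)
  case 0 then show ?case by simp
next
  case (Suc n)
  have a: "g (f y) = f (g y)" for y using Suc.prems by (metis comp_apply)
  have b: "g ((f ^^ n) y) = (f ^^ n) (g y)" for y using Suc.IH[OF Suc.prems] by (metis comp_apply)
  show ?case by (rule ext) (simp add: a b)
qed

theorem mainTheorem7:
  fixes p :: nat and E :: "(nat \<Rightarrow> nat) set"
  assumes "prime p" and "odd p"
    and "subspace_Fp p E" and "\<exists>u\<in>E. u \<noteq> (\<lambda>_. 0)"
    and "E \<noteq> constE p"
  shows "normlab p (Agrp p) \<subseteq> centr p (Agrp p) \<and> normlab p (Bgrp p E) \<subseteq> centr p (Bgrp p E)"
proof (rule conjI)
  have p: "p > 0" using assms(1) prime_gt_0_nat by blast
  show "normlab p (Agrp p) \<subseteq> centr p (Agrp p)"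
  proof
    fix g assume gN: "g \<in> normlab p (Agrp p)"
    have g: "g \<in> labSigma p" and eqs: "(\<lambda>h. g \<circ> h) ` Agrp p = (\<lambda>h. h \<circ> g) ` Agrp p"
      using gN unfolding normlab_def by auto
    have ag: "is_aut p g" using g unfolding labSigma_def Aut_def by auto
    obtain K where K1: "\<forall>x<p. g [x] = [(x + K []) mod p]"
      and "\<forall>x<p. \<forall>y<p. g [x,y] = [(x + K []) mod p, (y + K [x]) mod p]"
      by (rule lab_facts[OF g p])
    have aA: "aaut p \<in> Agrp p" unfolding Agrp_def by (intro CollectI exI[of _ "1::nat"]) simp
    have "g \<circ> aaut p \<in> (\<lambda>h. g \<circ> h) ` Agrp p" using aA by (rule imageI)
    hence "g \<circ> aaut p \<in> (\<lambda>h. h \<circ> g) ` Agrp p" by (simp only: eqs)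
    then obtain k where k: "g \<circ> aaut p = (aaut p ^^ k) \<circ> g" unfolding Agrp_def by auto
    have gw: "w \<in> words p \<Longrightarrow> g w \<in> words p" for w using ag unfolding is_aut_def bij_betw_def by auto
    have gout: "w \<notin> words p \<Longrightarrow> g w = w" for w using ag unfolding is_aut_def by auto
    have w0: "[0] \<in> words p" "[1 mod p] \<in> words p" using p by (auto simp: words_simps)
    have "g (aaut p [0]) = (aaut p ^^ k) (g [0])" using k by (metis comp_apply)
    hence "g [1 mod p] = rot p k (g [0])" using apow[OF p gw[OF w0(1)]] w0 by (simp add: aaut_def)
    hence "(1 mod p + K []) mod p = ((0 + K []) mod p + k) mod p" using K1 p by simp
    hence "(1 + K []) mod p = (k + K []) mod p" by (metis mod_add_left_eq add.commute add_0)
    hence "[1 + K [] = k + K []] (mod p)" by (simp add: cong_def)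
    hence k1: "[1 = k] (mod p)" by (metis cong_add_rcancel_nat)
    have rk: "rot p k v = rot p 1 v" for v
    proof (cases v)
      case (Cons x v')
      have "[x + 1 = x + k] (mod p)" using k1 cong_add cong_refl by blast
      thus ?thesis using Cons by (simp add: cong_def)
    qed simp
    have comm: "g \<circ> aaut p = aaut p \<circ> g"
    proof (rule ext)
      fix w
      show "(g \<circ> aaut p) w = (aaut p \<circ> g) w"
      proof (cases "w \<in> words p")
        case True
        have "(g \<circ> aaut p) w = rot p k (g w)" using k apow[OF p gw[OF True]] by (metis comp_apply)
        thus ?thesis using rk gw[OF True] by (simp add: aaut_def)
      next
        case False
        thus ?thesis using gout by (simp add: aaut_def)
      qed
    qed
    show "g \<in> centr p (Agrp p)" unfolding centr_def Agrp_def
      using g comm_pow[OF comm] unfolding labSigma_def by auto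
  qed
  show "normlab p (Bgrp p E) \<subseteq> centr p (Bgrp p E)"
  proof
    fix g assume gN: "g \<in> normlab p (Bgrp p E)"
    have g: "g \<in> labSigma p" and eqs: "(\<lambda>h. g \<circ> h) ` Bgrp p E = (\<lambda>h. h \<circ> g) ` Bgrp p E"
      using gN unfolding normlab_def by auto
    have Ev: "E \<subseteq> vecs p" using assms(3) unfolding subspace_Fp_def by auto
    obtain K where "\<forall>x<p. g [x] = [(x + K []) mod p]"
      and K2: "\<forall>x<p. \<forall>y<p. g [x,y] = [(x + K []) mod p, (y + K [x]) mod p]"
      by (rule lab_facts[OF g p])
    have F: "\<forall>u\<in>E. \<exists>w\<in>E. \<forall>x<p. u x = w ((x + K []) mod p)"
    proof
      fix u assume u: "u \<in> E"
      have "baut p u \<in> Bgrp p E" using u unfolding Bgrp_def by (rule imageI)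
      hence "g \<circ> baut p u \<in> (\<lambda>h. g \<circ> h) ` Bgrp p E" by (rule imageI)
      hence "g \<circ> baut p u \<in> (\<lambda>h. h \<circ> g) ` Bgrp p E" by (simp only: eqs)
      then obtain w where w: "w \<in> E" "g \<circ> baut p u = baut p w \<circ> g" unfolding Bgrp_def by auto
      show "\<exists>w\<in>E. \<forall>x<p. u x = w ((x + K []) mod p)"
        using key[OF p K2 _ _ w(2)] u w(1) Ev by blast
    qed
    define r where "r = K [] mod p"
    have r0: "r = 0"
    proof (rule ccontr)
      assume rn: "r \<noteq> 0"
      have rp: "r < p" using p by (simp add: r_def)
      have "\<forall>u\<in>E. \<exists>w\<in>E. \<forall>y<p. w y = u ((y + p - r) mod p)"
      proof
        fix u assume "u \<in> E"
        then obtain w where w: "w \<in> E" "\<forall>x<p. u x = w ((x + K []) mod p)" using F by blast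
        have "\<forall>y<p. w y = u ((y + p - r) mod p)"
        proof (intro allI impI)
          fix y assume y: "y < p"
          define x where "x = (y + p - r) mod p"
          have "(x + K []) mod p = (x + r) mod p" by (simp add: r_def mod_add_right_eq)
          also have "\<dots> = (y + p - r + r) mod p" by (simp add: x_def mod_add_left_eq)
          also have "\<dots> = y" using rp y by simp
          finally show "w y = u ((y + p - r) mod p)" using w(2) p by (simp add: x_def)
        qed
        thus "\<exists>w\<in>E. \<forall>y<p. w y = u ((y + p - r) mod p)" using w(1) by blast
      qed
      thus False using contra[OF assms(1) Ev _ rp] rn assms(4) by blast
    qed
    have comm: "g \<circ> baut p u = baut p u \<circ> g" if u: "u \<in> E" for u
    proof -
      have "baut p u \<in> Bgrp p E" using u unfolding Bgrp_def by (rule imageI)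
      hence "g \<circ> baut p u \<in> (\<lambda>h. g \<circ> h) ` Bgrp p E" by (rule imageI)
      hence "g \<circ> baut p u \<in> (\<lambda>h. h \<circ> g) ` Bgrp p E" by (simp only: eqs)
      then obtain w where w: "w \<in> E" "g \<circ> baut p u = baut p w \<circ> g" unfolding Bgrp_def by auto
      have uw: "\<forall>x<p. u x = w ((x + K []) mod p)" using key[OF p K2 _ _ w(2)] u w(1) Ev by blast
      have "u = w"
      proof (rule ext)
        fix i show "u i = w i"
        proof (cases "i < p")
          case True
          have "(i + K []) mod p = (i + K [] mod p) mod p" by (rule mod_add_right_eq[symmetric])
          hence "(i + K []) mod p = i" using r0 True by (simp add: r_def)
          thus ?thesis using uw True by metis
        next
          case False
          have uv: "u \<in> vecs p" "w \<in> vecs p" using u w(1) Ev by blast+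
          thus ?thesis using False unfolding vecs_def by simp
        qed
      qed
      thus ?thesis using w(2) by simp
    qed
    show "g \<in> centr p (Bgrp p E)" unfolding centr_def Bgrp_def
      using g comm unfolding labSigma_def by auto
  qed
qed

end
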